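(* Let $R$ be a $*$-ring. Then $R$ is strongly $J$-$*$-clean if and only if (1) $R$ is strongly $*$-clean, and (2) for every maximal ideal $M$ of $R$, $1$ is not the sum of two units in $R/M$.
   Context: All rings are associative with identity. A $*$-ring is a ring $R$ with an involution $*$, i.e. a map $a\mapsto a^*$ with $(a+b)^*=a^*+b^*$, $(ab)^*=b^*a^*$, $(a^* )^*=a$. $U(R)$ denotes the group of units and $J(R)$ the Jacobson radical of $R$. A projection is an element $e$ with $e^2=e=e^*$. $R$ is strongly $J$-$*$-clean if every $a\in R$ can be written $a=e+u$ with $e$ a projection, $u\in J(R)$ and $ae=ea$. $R$ is strongly $*$-clean if every $a\in R$ can be written $a=e+u$ with $e$ a projection, $u\in U(R)$ and $eu=ue$. Maximal ideals are two-sided. *)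

theory Defs
  imports Main
begin

text \<open>Rings are modelled by the type class ring_1 (associative, with identity,
not necessarily commutative); the involution is an explicit function.\<close>

definition star_ring :: "('a::ring_1 \<Rightarrow> 'a) \<Rightarrow> bool" where
  "star_ring s \<longleftrightarrow> (\<forall>a b. s (a + b) = s a + s b \<and> s (a * b) = s b * s a \<and> s (s a) = a)"

definition ring_units :: "'a::ring_1 set" where
  "ring_units = {u. \<exists>v. u * v = 1 \<and> v * u = 1}"

definition left_ideal :: "'a::ring_1 set \<Rightarrow> bool" where
  "left_ideal I \<longleftrightarrow> 0 \<in> I \<and> (\<forall>a\<in>I. \<forall>b\<in>I. a + b \<in> I) \<and> (\<forall>a\<in>I. - a \<in> I)
     \<and> (\<forall>r a. a \<in> I \<longrightarrow> r * a \<in> I)"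

definition two_sided_ideal :: "'a::ring_1 set \<Rightarrow> bool" where
  "two_sided_ideal I \<longleftrightarrow> left_ideal I \<and> (\<forall>r a. a \<in> I \<longrightarrow> a * r \<in> I)"

definition maximal_left_ideal :: "'a::ring_1 set \<Rightarrow> bool" where
  "maximal_left_ideal I \<longleftrightarrow> left_ideal I \<and> I \<noteq> UNIV
     \<and> (\<forall>K. left_ideal K \<and> I \<subseteq> K \<and> K \<noteq> UNIV \<longrightarrow> K = I)"

definition maximal_ideal :: "'a::ring_1 set \<Rightarrow> bool" where
  "maximal_ideal M \<longleftrightarrow> two_sided_ideal M \<and> M \<noteq> UNIV
     \<and> (\<forall>K. two_sided_ideal K \<and> M \<subseteq> K \<and> K \<noteq> UNIV \<longrightarrow> K = M)"

definition jacobson :: "'a::ring_1 set" where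
  "jacobson = \<Inter> {I. maximal_left_ideal I}"

definition projection :: "('a::ring_1 \<Rightarrow> 'a) \<Rightarrow> 'a \<Rightarrow> bool" where
  "projection s e \<longleftrightarrow> e * e = e \<and> s e = e"

definition strongly_J_star_clean :: "('a::ring_1 \<Rightarrow> 'a) \<Rightarrow> bool" where
  "strongly_J_star_clean s \<longleftrightarrow>
     (\<forall>a. \<exists>e u. projection s e \<and> u \<in> jacobson \<and> a = e + u \<and> a * e = e * a)"

definition strongly_star_clean :: "('a::ring_1 \<Rightarrow> 'a) \<Rightarrow> bool" where
  "strongly_star_clean s \<longleftrightarrow>
     (\<forall>a. \<exists>e u. projection s e \<and> u \<in> ring_units \<and> a = e + u \<and> e * u = u * e)"

text \<open>The coset u + M is a unit of the quotient ring R/M (unfolded).\<close>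
definition unit_mod :: "'a::ring_1 set \<Rightarrow> 'a \<Rightarrow> bool" where
  "unit_mod M u \<longleftrightarrow> (\<exists>w. u * w - 1 \<in> M \<and> w * u - 1 \<in> M)"

text \<open>In R/M, 1 is the sum of two units: 1 + M = (u + M) + (v + M) with both cosets units.\<close>
definition one_sum_two_units_mod :: "'a::ring_1 set \<Rightarrow> bool" where
  "one_sum_two_units_mod M \<longleftrightarrow> (\<exists>u v. unit_mod M u \<and> unit_mod M v \<and> 1 - (u + v) \<in> M)"

end

theory Submission imports Defs begin

lemma left_ideal_one: "left_ideal I \<Longrightarrow> 1 \<in> I \<Longrightarrow> I = UNIV"
proof -
  assume a: "left_ideal I" "1 \<in> I"
  have "x \<in> I" for x
  proof -
    have "x * 1 \<in> I" using a unfolding left_ideal_def by blast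
    then show ?thesis by simp
  qed
  then show ?thesis by auto
qed

lemma left_ideal_unit: "left_ideal I \<Longrightarrow> v \<in> I \<Longrightarrow> v \<in> ring_units \<Longrightarrow> 1 \<in> I"
proof -
  assume a: "left_ideal I" "v \<in> I" "v \<in> ring_units"
  then obtain w where "w * v = 1" unfolding ring_units_def by auto
  moreover have "w * v \<in> I" using a unfolding left_ideal_def by blast
  ultimately show ?thesis by simp
qed

lemma left_ideal_diff: "left_ideal I \<Longrightarrow> a \<in> I \<Longrightarrow> b \<in> I \<Longrightarrow> a - b \<in> I"
  unfolding left_ideal_def by (simp only: diff_conv_add_uminus)

lemma zorn_left:
  fixes L :: "'a::ring_1 set"
  assumes "left_ideal L" "1 \<notin> L"
  shows "\<exists>I. maximal_left_ideal I \<and> L \<subseteq> I"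
proof -
  define A where "A = {K. left_ideal K \<and> L \<subseteq> K \<and> (1::'a) \<notin> K}"
  have "\<forall>C\<in>chains A. \<exists>U\<in>A. \<forall>X\<in>C. X \<subseteq> U"
  proof
    fix C assume C: "C \<in> chains A"
    show "\<exists>U\<in>A. \<forall>X\<in>C. X \<subseteq> U"
    proof (cases "C = {}")
      case True then show ?thesis using assms A_def by auto
    next
      case False
      have ch: "\<forall>X\<in>C. \<forall>Y\<in>C. X \<subseteq> Y \<or> Y \<subseteq> X" "C \<subseteq> A"
        using C unfolding chains_def chain_subset_def by auto
      have "left_ideal (\<Union>C)"
        unfolding left_ideal_def
      proof (intro conjI ballI allI impI)
        obtain X where "X \<in> C" using False by auto
        moreover have "left_ideal X" using ch \<open>X \<in> C\<close> A_def by auto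
        ultimately show "0 \<in> \<Union>C" unfolding left_ideal_def by blast
      next
        fix a b assume "a \<in> \<Union>C" "b \<in> \<Union>C"
        then obtain X Y where "X \<in> C" "Y \<in> C" "a \<in> X" "b \<in> Y" by auto
        from ch \<open>X \<in> C\<close> \<open>Y \<in> C\<close> have "X \<subseteq> Y \<or> Y \<subseteq> X" by blast
        moreover have "left_ideal X" "left_ideal Y" using ch \<open>X \<in> C\<close> \<open>Y \<in> C\<close> A_def by auto
        ultimately show "a + b \<in> \<Union>C" using \<open>X \<in> C\<close> \<open>Y \<in> C\<close> \<open>a \<in> X\<close> \<open>b \<in> Y\<close>
          by (metis UnionI left_ideal_def subsetD)
      next
        fix a assume "a \<in> \<Union>C"
        then obtain X where "X \<in> C" "a \<in> X" by auto
        moreover have "left_ideal X" using ch \<open>X \<in> C\<close> A_def by auto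
        ultimately show "- a \<in> \<Union>C" unfolding left_ideal_def by blast
      next
        fix r a assume "a \<in> \<Union>C"
        then obtain X where "X \<in> C" "a \<in> X" by auto
        moreover have "left_ideal X" using ch \<open>X \<in> C\<close> A_def by auto
        ultimately show "r * a \<in> \<Union>C" unfolding left_ideal_def by blast
      qed
      moreover have "L \<subseteq> \<Union>C"
      proof -
        obtain X where "X \<in> C" using False by auto
        then have "L \<subseteq> X" using ch A_def by auto
        then show ?thesis using \<open>X \<in> C\<close> by auto
      qed
      moreover have "1 \<notin> \<Union>C"
      proof
        assume "1 \<in> \<Union>C"
        then obtain X where "X \<in> C" "1 \<in> X" by auto
        moreover have "X \<in> A" using ch \<open>X \<in> C\<close> by auto
        ultimately show False unfolding A_def by auto
      qed
      ultimately show ?thesis unfolding A_def by blast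
    qed
  qed
  from Zorn_Lemma2[OF this] obtain M where M: "M \<in> A" "\<forall>X\<in>A. M \<subseteq> X \<longrightarrow> X = M" by blast
  have "maximal_left_ideal M"
    unfolding maximal_left_ideal_def
  proof (intro conjI allI impI)
    show "left_ideal M" using M A_def by auto
    show "M \<noteq> UNIV" using M A_def by auto
    fix K assume K: "left_ideal K \<and> M \<subseteq> K \<and> K \<noteq> UNIV"
    then have "1 \<notin> K" using left_ideal_one by blast
    then have "K \<in> A" using K M A_def by auto
    then show "K = M" using M K by blast
  qed
  then show ?thesis using M A_def by auto
qed


lemma jac_mem: "x \<in> jacobson \<longleftrightarrow> (\<forall>I. maximal_left_ideal I \<longrightarrow> x \<in> I)"
  by (auto simp: jacobson_def)

lemma mli_left: "maximal_left_ideal I \<Longrightarrow> left_ideal I"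
  by (simp add: maximal_left_ideal_def)

lemma jac_left: "j \<in> jacobson \<Longrightarrow> r * j \<in> jacobson"
  unfolding jac_mem using mli_left unfolding left_ideal_def by blast

lemma jac_add: "a \<in> jacobson \<Longrightarrow> b \<in> jacobson \<Longrightarrow> a + b \<in> jacobson"
  unfolding jac_mem using mli_left unfolding left_ideal_def by blast

lemma Kplus:
  fixes I :: "'a::ring_1 set"
  assumes I: "maximal_left_ideal I" and b: "b \<notin> I"
  shows "\<exists>i c. i \<in> I \<and> 1 = i + c * b"
proof -
  define K where "K = {x. \<exists>i c. i \<in> I \<and> x = i + c * b}"
  have LI: "left_ideal I" using I mli_left by blast
  have "left_ideal K" unfolding left_ideal_def
  proof (intro conjI ballI allI impI)
    have "0 \<in> I" using LI unfolding left_ideal_def by blast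
    moreover have "(0::'a) = 0 + 0 * b" by simp
    ultimately show "0 \<in> K" unfolding K_def by blast
  next
    fix x y assume "x \<in> K" "y \<in> K"
    then obtain i1 c1 i2 c2 where "i1 \<in> I" "x = i1 + c1 * b" "i2 \<in> I" "y = i2 + c2 * b"
      unfolding K_def by blast
    moreover have "i1 + i2 \<in> I" using LI \<open>i1 \<in> I\<close> \<open>i2 \<in> I\<close> unfolding left_ideal_def by blast
    moreover have "x + y = (i1 + i2) + (c1 + c2) * b" using calculation by (simp add: algebra_simps)
    ultimately show "x + y \<in> K" unfolding K_def by blast
  next
    fix x assume "x \<in> K"
    then obtain i c where "i \<in> I" "x = i + c * b" unfolding K_def by blast
    moreover have "- i \<in> I" using LI \<open>i \<in> I\<close> unfolding left_ideal_def by blast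
    moreover have "- x = (- i) + (- c) * b" using calculation by simp
    ultimately show "- x \<in> K" unfolding K_def by blast
  next
    fix r x assume "x \<in> K"
    then obtain i c where "i \<in> I" "x = i + c * b" unfolding K_def by blast
    moreover have "r * i \<in> I" using LI \<open>i \<in> I\<close> unfolding left_ideal_def by blast
    moreover have "r * x = (r * i) + (r * c) * b" using calculation by (simp add: algebra_simps)
    ultimately show "r * x \<in> K" unfolding K_def by blast
  qed
  moreover have "I \<subseteq> K"
  proof
    fix x assume "x \<in> I"
    moreover have "x = x + 0 * b" by simp
    ultimately show "x \<in> K" unfolding K_def by blast
  qed
  moreover have "b \<in> K"
  proof -
    have "0 \<in> I" using LI unfolding left_ideal_def by blast
    moreover have "b = 0 + 1 * b" by simp
    ultimately show ?thesis unfolding K_def by blast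
  qed
  moreover have "K \<noteq> I" using b \<open>b \<in> K\<close> by blast
  ultimately have "K = UNIV" using I unfolding maximal_left_ideal_def by blast
  then have "1 \<in> K" by simp
  then show ?thesis unfolding K_def by blast
qed

lemma jac_leftinv:
  fixes j :: "'a::ring_1"
  assumes j: "j \<in> jacobson"
  shows "\<exists>z. z * (1 - r * j) = 1"
proof (rule ccontr)
  assume na: "\<not> (\<exists>z. z * (1 - r * j) = 1)"
  define L where "L = {x * (1 - r * j) | x. True}"
  have "left_ideal L" unfolding left_ideal_def L_def
  proof (intro conjI ballI allI impI)
    show "0 \<in> {x * (1 - r * j) |x. True}" by (rule CollectI, rule exI[of _ 0], simp)
  next
    fix a b assume "a \<in> {x * (1 - r * j) |x. True}" "b \<in> {x * (1 - r * j) |x. True}"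
    then obtain x y where "a = x * (1 - r * j)" "b = y * (1 - r * j)" by blast
    then have "a + b = (x + y) * (1 - r * j)" by (simp only: distrib_right)
    then show "a + b \<in> {x * (1 - r * j) |x. True}" by blast
  next
    fix a assume "a \<in> {x * (1 - r * j) |x. True}"
    then obtain x where "a = x * (1 - r * j)" by blast
    then have "- a = (- x) * (1 - r * j)" by simp
    then show "- a \<in> {x * (1 - r * j) |x. True}" by blast
  next
    fix c a assume "a \<in> {x * (1 - r * j) |x. True}"
    then obtain x where "a = x * (1 - r * j)" by blast
    then have "c * a = (c * x) * (1 - r * j)" by (simp add: mult.assoc)
    then show "c * a \<in> {x * (1 - r * j) |x. True}" by blast
  qed
  moreover have "1 \<notin> L" using na unfolding L_def by auto
  ultimately obtain I where I: "maximal_left_ideal I" "L \<subseteq> I" using zorn_left by blast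
  have LI: "left_ideal I" using I mli_left by blast
  have "1 * (1 - r * j) \<in> L" unfolding L_def by blast
  then have "1 - r * j \<in> I" using I by auto
  moreover have "r * j \<in> I" using j I LI unfolding jac_mem left_ideal_def by blast
  ultimately have "(1 - r * j) + r * j \<in> I" using LI unfolding left_ideal_def by blast
  then have "1 \<in> I" by simp
  then show False using I left_ideal_one LI unfolding maximal_left_ideal_def by blast
qed

lemma jac_unit:
  fixes j :: "'a::ring_1"
  assumes j: "j \<in> jacobson"
  shows "1 - r * j \<in> ring_units"
proof -
  obtain z where z: "z * (1 - r * j) = 1" using jac_leftinv[OF j] by blast
  then have z2: "z = 1 - (- (z * r)) * j" by (simp add: algebra_simps)
  obtain z' where z': "z' * (1 - (- (z * r)) * j) = 1" using jac_leftinv[OF j] by blast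
  then have "z' * z = 1" unfolding z2[symmetric] .
  have "z' = z' * (z * (1 - r * j))" using z by simp
  also have "\<dots> = (z' * z) * (1 - r * j)" by (simp add: mult.assoc)
  also have "\<dots> = 1 - r * j" using \<open>z' * z = 1\<close> by simp
  finally have "(1 - r * j) * z = 1" using \<open>z' * z = 1\<close> by simp
  then show ?thesis using z unfolding ring_units_def by blast
qed

lemma jac_char:
  fixes x :: "'a::ring_1"
  assumes h: "\<And>r. \<exists>z. z * (1 - r * x) = 1"
  shows "x \<in> jacobson"
  unfolding jac_mem
proof (intro allI impI)
  fix I :: "'a set" assume I: "maximal_left_ideal I"
  have LI: "left_ideal I" using I mli_left by blast
  show "x \<in> I"
  proof (rule ccontr)
    assume "x \<notin> I"
    then obtain i c where ic: "i \<in> I" "1 = i + c * x" using Kplus[OF I] by blast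
    obtain z where z: "z * (1 - c * x) = 1" using h by blast
    have "i = 1 - c * x" using ic by (simp add: algebra_simps)
    then have "z * i = 1" using z by simp
    moreover have "z * i \<in> I" using LI ic unfolding left_ideal_def by blast
    ultimately have "1 \<in> I" by simp
    then have "I = UNIV" using left_ideal_one LI by blast
    then show False using I unfolding maximal_left_ideal_def by blast
  qed
qed

lemma jac_right:
  fixes x :: "'a::ring_1"
  assumes x: "x \<in> jacobson"
  shows "x * t \<in> jacobson"
proof (rule jac_char)
  fix r
  obtain z where z: "z * (1 - (t * r) * x) = 1" using jac_leftinv[OF x] by blast
  then have z2: "z - z * (t * r) * x = 1" by (simp add: algebra_simps)
  have "(1 + r * x * z * t) * (1 - r * (x * t)) = 1 - r * x * t + r * x * (z - z * (t * r) * x) * t"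
    by (simp add: algebra_simps)
  also have "\<dots> = 1" using z2 by (simp add: mult.assoc)
  finally show "\<exists>z. z * (1 - r * (x * t)) = 1" by blast
qed


lemma s_add: "star_ring s \<Longrightarrow> s (a + b) = s a + s b"
  unfolding star_ring_def by blast
lemma s_mult: "star_ring s \<Longrightarrow> s (a * b) = s b * s a"
  unfolding star_ring_def by blast
lemma s_inv: "star_ring s \<Longrightarrow> s (s a) = a"
  unfolding star_ring_def by blast

lemma s_one: assumes "star_ring s" shows "s 1 = 1"
proof -
  have "s (1 * s 1) = s (s 1) * s 1" using s_mult[OF assms] by blast
  then show ?thesis using s_inv[OF assms] by simp
qed

lemma s_zero: assumes "star_ring s" shows "s 0 = 0"
proof -
  have "s (0 + 0) = s 0 + s 0" using s_add[OF assms] by blast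
  then show ?thesis by simp
qed

lemma s_minus: assumes "star_ring s" shows "s (- a) = - s a"
proof -
  have "s (a + - a) = s a + s (- a)" using s_add[OF assms] by blast
  then have "s a + s (- a) = 0" using s_zero[OF assms] by simp
  then show ?thesis by (simp add: add_eq_0_iff2)
qed

lemma s_diff: assumes "star_ring s" shows "s (a - b) = s a - s b"
  using s_add[OF assms, of a "- b"] s_minus[OF assms, of b] by simp

lemma s_one_minus: assumes "star_ring s" "s e = e" shows "s (1 - e) = 1 - e"
  using s_diff[OF assms(1)] s_one[OF assms(1)] assms(2) by simp

lemma idem_aux1: "(e::'a::ring_1) * e = e \<Longrightarrow> e * (1 - e) = 0"
  by (simp add: algebra_simps)
lemma idem_aux2: "(e::'a::ring_1) * e = e \<Longrightarrow> (1 - e) * e = 0"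
  by (simp add: algebra_simps)

lemma sc_idem_proj:
  fixes s :: "'a::ring_1 \<Rightarrow> 'a"
  assumes st: "star_ring s" and sc: "strongly_star_clean s" and ff: "f * f = f"
  shows "s f = f"
proof -
  obtain e u where pe: "projection s e" and u: "u \<in> ring_units" and fe: "f = e + u" and eu: "e * u = u * e"
    using sc unfolding strongly_star_clean_def by blast
  have ee: "e * e = e" and se: "s e = e" using pe unfolding projection_def by auto
  obtain u' where u': "u' * u = 1" using u unfolding ring_units_def by blast
  have uf: "u = f - e" using fe by simp
  have fe_c: "f * e = e * f" using eu fe by (simp add: algebra_simps ee)
  have efe: "e * f * e = f * e" by (simp add: fe_c[symmetric] mult.assoc ee)
  have fef: "f * e * f = f * e" by (metis fe_c ff mult.assoc)
  define q where "q = u * u"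
  have q: "q = f + e - (f * e + f * e)"
  proof -
    have "q = f * f - f * e - e * f + e * e" unfolding q_def uf by (simp add: algebra_simps)
    then show ?thesis using ff ee fe_c by simp
  qed
  have "u * q = f * f + f * e - (f * f * e + f * f * e) - e * f - e * e + (e * f * e + e * f * e)"
    unfolding q uf by (simp add: algebra_simps)
  also have "\<dots> = f - e" using ff ee efe fe_c by simp
  finally have uq: "u * q = u" using uf by simp
  have "q = u' * (u * q)" using u' by (simp add: mult.assoc[symmetric])
  then have q1: "q = 1" using uq u' by simp
  have "f * q = f * f + f * e - (f * f * e + f * f * e)" unfolding q by (simp add: algebra_simps)
  also have "\<dots> = f - f * e" using ff by simp
  finally have "f * e = 0" using q1 by simp
  then have "f + e = 1" using q q1 by simp
  then have "f = 1 - e" by (simp add: algebra_simps)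
  then show ?thesis using s_one_minus[OF st se] by simp
qed

lemma idem_central:
  fixes s :: "'a::ring_1 \<Rightarrow> 'a" and e :: 'a
  assumes st: "star_ring s" and P: "\<And>f. f * f = f \<Longrightarrow> s f = f" and ee: "e * e = e"
  shows "e * r = r * e"
proof -
  have se: "s e = e" using P ee .
  have a1: "e * (1 - e) = 0" using idem_aux1[OF ee] .
  have a2: "(1 - e) * e = 0" using idem_aux2[OF ee] .
  have s1e: "s (1 - e) = 1 - e" using s_one_minus[OF st se] .
  define g where "g = e + e * r * (1 - e)"
  have "g * g = e * e + e * e * r * (1 - e) + e * r * ((1 - e) * e) + e * r * ((1 - e) * e) * r * (1 - e)"
    unfolding g_def by (simp add: algebra_simps)
  also have "\<dots> = g" unfolding g_def using ee a2 by simp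
  finally have "s g = g" using P by blast
  moreover have "s g = e + (1 - e) * s r * e"
    unfolding g_def using s_add[OF st] s_mult[OF st] se s1e by (simp add: mult.assoc)
  ultimately have h1: "e * r * (1 - e) = (1 - e) * s r * e" unfolding g_def by simp
  have "e * r * (1 - e) = e * (e * r * (1 - e))" using ee by (simp add: mult.assoc[symmetric])
  also have "\<dots> = (e * (1 - e)) * s r * e" unfolding h1 by (simp add: mult.assoc)
  finally have z1: "e * r * (1 - e) = 0" using a1 by simp
  define h where "h = e + (1 - e) * r * e"
  have "h * h = e * e + (e * (1 - e)) * r * e + (1 - e) * r * (e * e) + (1 - e) * r * (e * (1 - e)) * r * e"
    unfolding h_def by (simp add: algebra_simps)
  also have "\<dots> = h" unfolding h_def using ee a1 by simp
  finally have "s h = h" using P by blast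
  moreover have "s h = e + e * s r * (1 - e)"
    unfolding h_def using s_add[OF st] s_mult[OF st] se s1e by (simp add: mult.assoc)
  ultimately have h2: "(1 - e) * r * e = e * s r * (1 - e)" unfolding h_def by simp
  have oo: "(1 - e) * (1 - e) = 1 - e" using a1 by (simp add: algebra_simps)
  have "(1 - e) * r * e = (1 - e) * ((1 - e) * r * e)" using oo by (simp add: mult.assoc[symmetric])
  also have "\<dots> = ((1 - e) * e) * s r * (1 - e)" unfolding h2 by (simp add: mult.assoc)
  finally have z2: "(1 - e) * r * e = 0" using a2 by simp
  have "e * r * (1 - e) = e * r - e * r * e" by (simp add: algebra_simps)
  then have "e * r = e * r * e" using z1 by simp
  moreover have "(1 - e) * r * e = r * e - e * r * e" by (simp add: algebra_simps)
  then have "r * e = e * r * e" using z2 by simp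
  ultimately show ?thesis by simp
qed


lemma tsi_0: "two_sided_ideal P \<Longrightarrow> 0 \<in> P"
  unfolding two_sided_ideal_def left_ideal_def by blast
lemma tsi_add: "two_sided_ideal P \<Longrightarrow> a \<in> P \<Longrightarrow> b \<in> P \<Longrightarrow> a + b \<in> P"
  unfolding two_sided_ideal_def left_ideal_def by blast
lemma tsi_neg: "two_sided_ideal P \<Longrightarrow> a \<in> P \<Longrightarrow> - a \<in> P"
  unfolding two_sided_ideal_def left_ideal_def by blast
lemma tsi_diff: "two_sided_ideal P \<Longrightarrow> a \<in> P \<Longrightarrow> b \<in> P \<Longrightarrow> a - b \<in> P"
  using tsi_add[of P a "- b"] tsi_neg[of P b] by simp
lemma tsi_lmul: "two_sided_ideal P \<Longrightarrow> a \<in> P \<Longrightarrow> r * a \<in> P"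
  unfolding two_sided_ideal_def left_ideal_def by blast
lemma tsi_rmul: "two_sided_ideal P \<Longrightarrow> a \<in> P \<Longrightarrow> a * r \<in> P"
  unfolding two_sided_ideal_def by blast
lemma tsi_one: "two_sided_ideal P \<Longrightarrow> 1 \<in> P \<Longrightarrow> P = UNIV"
  unfolding two_sided_ideal_def using left_ideal_one by blast
lemma tsi_unit: "two_sided_ideal P \<Longrightarrow> v \<in> P \<Longrightarrow> v \<in> ring_units \<Longrightarrow> P = UNIV"
  unfolding two_sided_ideal_def using left_ideal_one left_ideal_unit by blast

lemma li_add: "left_ideal P \<Longrightarrow> a \<in> P \<Longrightarrow> b \<in> P \<Longrightarrow> a + b \<in> P"
  unfolding left_ideal_def by blast
lemma li_lmul: "left_ideal P \<Longrightarrow> a \<in> P \<Longrightarrow> r * a \<in> P"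
  unfolding left_ideal_def by blast

lemma cent_split:
  fixes I :: "'a::ring_1 set"
  assumes I: "maximal_left_ideal I" and ee: "e * e = e" and c: "\<forall>r. e * r = r * e"
  shows "e \<in> I \<or> 1 - e \<in> I"
proof (cases "e \<in> I")
  case True then show ?thesis by simp
next
  case False
  then obtain i c' where ic: "i \<in> I" "1 = i + c' * e" using Kplus[OF I] by blast
  have "(1 - e) * (c' * e) = ((1 - e) * e) * c'" using c by (simp add: mult.assoc)
  also have "\<dots> = 0" using idem_aux2[OF ee] by simp
  finally have z: "(1 - e) * (c' * e) = 0" .
  have "1 - e = (1 - e) * (i + c' * e)" using ic(2) by simp
  also have "\<dots> = (1 - e) * i" using z by (simp add: distrib_left)
  finally have eq: "1 - e = (1 - e) * i" .
  have "(1 - e) * i \<in> I" using ic(1) li_lmul mli_left[OF I] by blast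
  then show ?thesis using eq by simp
qed

definition Pann :: "'a::ring_1 set \<Rightarrow> 'a set" where
  "Pann I = {x. \<forall>r. x * r \<in> I}"

lemma Pann_tsi:
  assumes LI: "left_ideal I" shows "two_sided_ideal (Pann I)"
proof -
  have m: "x \<in> Pann I \<longleftrightarrow> (\<forall>r. x * r \<in> I)" for x unfolding Pann_def by simp
  have "0 \<in> Pann I" unfolding m using LI unfolding left_ideal_def by simp
  moreover have "\<forall>a\<in>Pann I. \<forall>b\<in>Pann I. a + b \<in> Pann I"
    using li_add[OF LI] by (auto simp: m distrib_right)
  moreover have "\<forall>a\<in>Pann I. - a \<in> Pann I"
    using LI unfolding left_ideal_def by (auto simp: m)
  moreover have "\<forall>c a. a \<in> Pann I \<longrightarrow> c * a \<in> Pann I"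
    unfolding m using li_lmul[OF LI] by (simp add: mult.assoc)
  moreover have "\<forall>c a. a \<in> Pann I \<longrightarrow> a * c \<in> Pann I"
    unfolding m by (simp add: mult.assoc)
  ultimately show ?thesis unfolding two_sided_ideal_def left_ideal_def by blast
qed

lemma Pann_sub: "Pann I \<subseteq> I"
  unfolding Pann_def by (auto, metis mult.right_neutral)

lemma Pann_cent: "left_ideal I \<Longrightarrow> e \<in> I \<Longrightarrow> \<forall>r. e * r = r * e \<Longrightarrow> e \<in> Pann I"
  unfolding Pann_def using li_lmul by fastforce


lemma unit_neg: "v \<in> ring_units \<Longrightarrow> - v \<in> ring_units"
proof -
  assume "v \<in> ring_units"
  then obtain w where "v * w = 1" "w * v = 1" unfolding ring_units_def by blast
  then have "(- v) * (- w) = 1 \<and> (- w) * (- v) = 1" by simp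
  then show ?thesis unfolding ring_units_def by blast
qed

lemma cent_compl: "\<forall>r. e * r = r * e \<Longrightarrow> \<forall>r. (1 - e) * r = r * (1 - (e::'a::ring_1))"
proof
  fix r assume "\<forall>r. e * r = r * e"
  then have "e * r = r * e" by blast
  then show "(1 - e) * r = r * (1 - e)" by (simp add: left_diff_distrib right_diff_distrib)
qed

lemma Pann_max:
  fixes I :: "'a::ring_1 set"
  assumes CL: "\<forall>a::'a. \<exists>e v. e * e = e \<and> (\<forall>r. e * r = r * e) \<and> v \<in> ring_units \<and> a = e + v"
    and I: "maximal_left_ideal I"
  shows "maximal_ideal (Pann I)"
proof -
  have LI: "left_ideal I" using I mli_left by blast
  have T: "two_sided_ideal (Pann I)" using Pann_tsi[OF LI] .
  have n1: "1 \<notin> I"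
  proof
    assume "1 \<in> I" then have "I = UNIV" using left_ideal_one[OF LI] by simp
    then show False using I unfolding maximal_left_ideal_def by simp
  qed
  have "1 \<notin> Pann I" using Pann_sub n1 by blast
  then have NU: "Pann I \<noteq> UNIV" by blast
  have "K = Pann I" if K: "two_sided_ideal K" "Pann I \<subseteq> K" "K \<noteq> UNIV" for K
  proof (rule ccontr)
    assume "K \<noteq> Pann I"
    then have "\<not> K \<subseteq> Pann I" using K(2) by (simp add: subset_antisym)
    then obtain k where k: "k \<in> K" "k \<notin> Pann I" by (simp add: subset_iff) blast
    then obtain r0 where r0: "k * r0 \<notin> I" unfolding Pann_def by blast
    define b where "b = k * r0"
    have bK: "b \<in> K" unfolding b_def using tsi_rmul[OF K(1) k(1)] .
    have bI: "b \<notin> I" unfolding b_def using r0 .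
    obtain i c where ic: "i \<in> I" "1 = i + c * b" using Kplus[OF I bI] by blast
    obtain e v where ev: "e * e = e" "\<forall>r. e * r = r * e" "v \<in> ring_units" "i = e + v"
      using CL[rule_format, of i] by blast
    show False
    proof (cases "e \<in> I")
      case True
      have "v = i - e" using ev(4) by simp
      then have "v \<in> I" using left_ideal_diff[OF LI ic(1) True] by simp
      then have "1 \<in> I" using left_ideal_unit[OF LI] ev(3) by blast
      then show False using n1 by blast
    next
      case False
      then have "1 - e \<in> I" using cent_split[OF I ev(1,2)] by blast
      then have "1 - e \<in> Pann I" using Pann_cent[OF LI] cent_compl[OF ev(2)] by blast
      then have eK: "1 - e \<in> K" using K(2) by blast
      have "v = (1 - e) - c * b" using ev(4) ic(2)[symmetric] by (simp add: algebra_simps)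
      moreover have "c * b \<in> K" using tsi_lmul[OF K(1) bK] .
      ultimately have "v \<in> K" using tsi_diff[OF K(1) eK] by simp
      then have "K = UNIV" using tsi_unit[OF K(1) _ ev(3)] by simp
      then show False using K(3) by simp
    qed
  qed
  then show ?thesis unfolding maximal_ideal_def using T NU by simp
qed

lemma unit_idem:
  fixes P :: "'a::ring_1 set"
  assumes P: "two_sided_ideal P" and p: "p \<in> P" and w: "w \<in> ring_units" and h: "h = p + w"
    and hh: "h * h - h \<in> P"
  shows "h - 1 \<in> P"
proof -
  obtain w' where w': "w' * w = 1" using w unfolding ring_units_def by blast
  have A0: "w' * h - 1 = w' * p" using w' h by (simp add: algebra_simps)
  have A: "w' * h - 1 \<in> P" unfolding A0 using tsi_lmul[OF P p] .
  have B: "(w' * h - 1) * h \<in> P" using tsi_rmul[OF P A] .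
  have C: "w' * (h * h - h) \<in> P" using tsi_lmul[OF P hh] .
  have D0: "h - w' * h = w' * (h * h - h) - (w' * h - 1) * h" by (simp add: algebra_simps)
  have D: "h - w' * h \<in> P" unfolding D0 using tsi_diff[OF P C B] .
  have "h - 1 = (h - w' * h) + (w' * h - 1)" by simp
  then show ?thesis using tsi_add[OF P D A] by simp
qed

lemma idem_mod:
  fixes I :: "'a::ring_1 set"
  assumes CL: "\<forall>a::'a. \<exists>e v. e * e = e \<and> (\<forall>r. e * r = r * e) \<and> v \<in> ring_units \<and> a = e + v"
    and I: "maximal_left_ideal I" and gg: "g * g - g \<in> Pann I"
  shows "g - 1 \<in> Pann I \<or> g \<in> Pann I"
proof -
  have LI: "left_ideal I" using I mli_left by blast
  have T: "two_sided_ideal (Pann I)" using Pann_tsi[OF LI] .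
  obtain e v where ev: "e * e = e" "\<forall>r. e * r = r * e" "v \<in> ring_units" "g = e + v"
    using CL by blast
  show ?thesis
  proof (cases "e \<in> I")
    case True
    then have "e \<in> Pann I" using Pann_cent[OF LI] ev(2) by blast
    then show ?thesis using unit_idem[OF T _ ev(3) ev(4) gg] by blast
  next
    case False
    then have "1 - e \<in> I" using cent_split[OF I ev(1,2)] by blast
    then have eP: "1 - e \<in> Pann I" using Pann_cent[OF LI] cent_compl[OF ev(2)] by blast
    have h: "1 - g = (1 - e) + (- v)" using ev(4) by simp
    have hh: "(1 - g) * (1 - g) - (1 - g) = g * g - g" by (simp add: algebra_simps)
    have "(1 - g) - 1 \<in> Pann I"
      using unit_idem[OF T eP unit_neg[OF ev(3)] h] gg hh by simp
    then have "- (- g) \<in> Pann I" using tsi_neg[OF T] by fastforce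
    then show ?thesis by simp
  qed
qed

lemma unit_mod_out:
  fixes I :: "'a::ring_1 set"
  assumes CL: "\<forall>a::'a. \<exists>e v. e * e = e \<and> (\<forall>r. e * r = r * e) \<and> v \<in> ring_units \<and> a = e + v"
    and I: "maximal_left_ideal I" and x: "x \<notin> I"
  shows "unit_mod (Pann I) x"
proof -
  have LI: "left_ideal I" using I mli_left by blast
  have T: "two_sided_ideal (Pann I)" using Pann_tsi[OF LI] .
  have n1: "1 \<notin> I"
  proof
    assume "1 \<in> I" then have "I = UNIV" using left_ideal_one[OF LI] by simp
    then show False using I unfolding maximal_left_ideal_def by simp
  qed
  obtain i c where ic: "i \<in> I" "1 = i + c * x" using Kplus[OF I x] by blast
  obtain e v where ev: "e * e = e" "\<forall>r. e * r = r * e" "v \<in> ring_units" "i = e + v"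
    using CL by blast
  obtain v' where v': "v' * v = 1" using ev(3) unfolding ring_units_def by blast
  have "e \<notin> I"
  proof
    assume "e \<in> I"
    have "v = i - e" using ev(4) by simp
    then have "v \<in> I" using left_ideal_diff[OF LI ic(1) \<open>e \<in> I\<close>] by simp
    then have "1 \<in> I" using left_ideal_unit[OF LI] ev(3) by blast
    then show False using n1 by blast
  qed
  then have "1 - e \<in> I" using cent_split[OF I ev(1,2)] by blast
  then have eP: "1 - e \<in> Pann I" using Pann_cent[OF LI] cent_compl[OF ev(2)] by blast
  define w where "w = - (v' * c)"
  have e1: "1 - e = c * x + v" using ev(4) ic(2)[symmetric] by (simp add: algebra_simps)
  have "w * x - 1 = - (v' * (c * x + v))" unfolding w_def using v' by (simp add: algebra_simps)
  then have W: "w * x - 1 = - (v' * (1 - e))" using e1 by simp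
  have wx: "w * x - 1 \<in> Pann I" unfolding W using tsi_neg[OF T tsi_lmul[OF T eP]] .
  define g where "g = x * w"
  have "g * g - g = x * (w * x - 1) * w" unfolding g_def by (simp add: algebra_simps)
  then have "g * g - g \<in> Pann I" using tsi_rmul[OF T tsi_lmul[OF T wx]] by simp
  then have "g - 1 \<in> Pann I \<or> g \<in> Pann I" using idem_mod[OF CL I] by blast
  then show ?thesis
  proof
    assume "g - 1 \<in> Pann I"
    then show ?thesis unfolding unit_mod_def g_def using wx by blast
  next
    assume "g \<in> Pann I"
    then have a: "x * w * x \<in> Pann I" unfolding g_def using tsi_rmul[OF T] by blast
    have b: "x * (w * x - 1) \<in> Pann I" using tsi_lmul[OF T wx] .
    have "x = x * w * x - x * (w * x - 1)" by (simp add: algebra_simps)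
    then have "x \<in> Pann I" using tsi_diff[OF T a b] by simp
    then show ?thesis using Pann_sub x by blast
  qed
qed

lemma one_plus_unit:
  fixes u :: "'a::ring_1"
  assumes CL: "\<forall>a::'a. \<exists>e v. e * e = e \<and> (\<forall>r. e * r = r * e) \<and> v \<in> ring_units \<and> a = e + v"
    and C2: "\<forall>M::'a set. maximal_ideal M \<longrightarrow> \<not> one_sum_two_units_mod M"
    and u: "u \<in> ring_units"
  shows "1 + u \<in> jacobson"
  unfolding jac_mem
proof (intro allI impI)
  fix I :: "'a set" assume I: "maximal_left_ideal I"
  have LI: "left_ideal I" using I mli_left by blast
  have T: "two_sided_ideal (Pann I)" using Pann_tsi[OF LI] .
  show "1 + u \<in> I"
  proof (rule ccontr)
    assume "1 + u \<notin> I"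
    then have U1: "unit_mod (Pann I) (1 + u)" using unit_mod_out[OF CL I] by blast
    obtain u' where u': "u * u' = 1" "u' * u = 1" using u unfolding ring_units_def by blast
    have "(- u) * (- u') - 1 = 0" "(- u') * (- u) - 1 = 0" using u' by simp_all
    then have "(- u) * (- u') - 1 \<in> Pann I \<and> (- u') * (- u) - 1 \<in> Pann I" using tsi_0[OF T] by simp
    then have U2: "unit_mod (Pann I) (- u)" unfolding unit_mod_def by blast
    have "1 - ((1 + u) + - u) = 0" by simp
    then have "1 - ((1 + u) + - u) \<in> Pann I" using tsi_0[OF T] by simp
    then have "one_sum_two_units_mod (Pann I)" unfolding one_sum_two_units_mod_def
      using U1 U2 by blast
    then show False using C2 Pann_max[OF CL I] by blast
  qed
qed


lemma jac_zero: "0 \<in> jacobson"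
  unfolding jac_mem using mli_left unfolding left_ideal_def by blast

lemma jac_neg: "j \<in> jacobson \<Longrightarrow> - j \<in> jacobson"
  using jac_left[of j "-1"] by simp

lemma jac_in_max:
  fixes M :: "'a::ring_1 set"
  assumes M: "maximal_ideal M" and x: "x \<in> jacobson"
  shows "x \<in> M"
proof (rule ccontr)
  assume xM: "x \<notin> M"
  have TM: "two_sided_ideal M" using M unfolding maximal_ideal_def by blast
  define K where "K = {y. \<exists>m j. m \<in> M \<and> j \<in> jacobson \<and> y = m + j}"
  have "0 \<in> K" unfolding K_def using tsi_0[OF TM] jac_zero by force
  moreover have "\<forall>a\<in>K. \<forall>b\<in>K. a + b \<in> K"
  proof (intro ballI)
    fix a b assume "a \<in> K" "b \<in> K"
    then obtain m1 j1 m2 j2 where h: "m1 \<in> M" "j1 \<in> jacobson" "a = m1 + j1"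
      "m2 \<in> M" "j2 \<in> jacobson" "b = m2 + j2" unfolding K_def by blast
    have "a + b = (m1 + m2) + (j1 + j2)" using h(3,6) by (simp add: algebra_simps)
    moreover have "m1 + m2 \<in> M" using tsi_add[OF TM h(1,4)] .
    moreover have "j1 + j2 \<in> jacobson" using jac_add[OF h(2,5)] .
    ultimately show "a + b \<in> K" unfolding K_def by blast
  qed
  moreover have "\<forall>a\<in>K. - a \<in> K"
  proof
    fix a assume "a \<in> K"
    then obtain m j where h: "m \<in> M" "j \<in> jacobson" "a = m + j" unfolding K_def by blast
    have "- a = (- m) + (- j)" using h(3) by simp
    moreover have "- m \<in> M" using tsi_neg[OF TM h(1)] .
    moreover have "- j \<in> jacobson" using jac_neg[OF h(2)] .
    ultimately show "- a \<in> K" unfolding K_def by blast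
  qed
  moreover have "\<forall>r a. a \<in> K \<longrightarrow> r * a \<in> K"
  proof (intro allI impI)
    fix r a assume "a \<in> K"
    then obtain m j where h: "m \<in> M" "j \<in> jacobson" "a = m + j" unfolding K_def by blast
    have "r * a = r * m + r * j" using h(3) by (simp add: distrib_left)
    moreover have "r * m \<in> M" using tsi_lmul[OF TM h(1)] .
    moreover have "r * j \<in> jacobson" using jac_left[OF h(2)] .
    ultimately show "r * a \<in> K" unfolding K_def by blast
  qed
  moreover have "\<forall>r a. a \<in> K \<longrightarrow> a * r \<in> K"
  proof (intro allI impI)
    fix r a assume "a \<in> K"
    then obtain m j where h: "m \<in> M" "j \<in> jacobson" "a = m + j" unfolding K_def by blast
    have "a * r = m * r + j * r" using h(3) by (simp add: distrib_right)
    moreover have "m * r \<in> M" using tsi_rmul[OF TM h(1)] .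
    moreover have "j * r \<in> jacobson" using jac_right[OF h(2)] .
    ultimately show "a * r \<in> K" unfolding K_def by blast
  qed
  ultimately have TK: "two_sided_ideal K" unfolding two_sided_ideal_def left_ideal_def by blast
  have MK: "M \<subseteq> K"
  proof
    fix m assume "m \<in> M"
    moreover have "m = m + 0" by simp
    ultimately show "m \<in> K" unfolding K_def using jac_zero by blast
  qed
  have "x \<in> K"
  proof -
    have "x = 0 + x" by simp
    then show ?thesis unfolding K_def using tsi_0[OF TM] x by blast
  qed
  then have "K \<noteq> M" using xM by blast
  then have "K = UNIV" using M TK MK unfolding maximal_ideal_def by blast
  then have "1 \<in> K" by simp
  then obtain m j where h: "m \<in> M" "j \<in> jacobson" "1 = m + j" unfolding K_def by blast
  have "m = 1 - 1 * j" using h(3) by (simp add: algebra_simps)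
  then have "m \<in> ring_units" using jac_unit[OF h(2), of 1] by simp
  then have "M = UNIV" using tsi_unit[OF TM h(1)] by simp
  then show False using M unfolding maximal_ideal_def by simp
qed

lemma idem_unit_mod:
  fixes M :: "'a::ring_1 set"
  assumes TM: "two_sided_ideal M" and uw: "u * w - 1 \<in> M" and uu: "u - u * u \<in> M"
  shows "u - 1 \<in> M"
proof -
  have a: "(u - u * u) * w \<in> M" using tsi_rmul[OF TM uu] .
  have b: "u * (u * w - 1) \<in> M" using tsi_lmul[OF TM uw] .
  have "u * w - u = (u - u * u) * w + u * (u * w - 1)" by (simp add: algebra_simps)
  then have c: "u * w - u \<in> M" using tsi_add[OF TM a b] by simp
  have "u - 1 = (u * w - 1) - (u * w - u)" by simp
  then show ?thesis using tsi_diff[OF TM uw c] by simp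
qed

theorem corollary2p5:
  fixes s :: "'a::ring_1 \<Rightarrow> 'a"
  assumes "star_ring s"
  shows "strongly_J_star_clean s \<longleftrightarrow>
           (strongly_star_clean s \<and> (\<forall>M::'a set. maximal_ideal M \<longrightarrow> \<not> one_sum_two_units_mod M))"
proof
  assume JC: "strongly_J_star_clean s"
  have SC: "strongly_star_clean s" unfolding strongly_star_clean_def
  proof
    fix a :: 'a
    obtain e j where h: "projection s e" "j \<in> jacobson" "a = e + j" "a * e = e * a"
      using JC unfolding strongly_J_star_clean_def by blast
    have ee: "e * e = e" and se: "s e = e" using h(1) unfolding projection_def by auto
    have ej: "e * j = j * e" using h(3,4) by (simp add: algebra_simps)
    define t where "t = e + e - 1"
    have tt: "t * t = 1" unfolding t_def using ee by (simp add: algebra_simps)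
    define y where "y = 1 - (- t) * j"
    have "y \<in> ring_units" unfolding y_def using jac_unit[OF h(2)] .
    then obtain y' where y': "y * y' = 1" "y' * y = 1" unfolding ring_units_def by blast
    define v where "v = t * y"
    have v_eq: "v = t + j" unfolding v_def y_def
    proof -
      have "t * (1 - - t * j) = t + (t * t) * j" by (simp add: algebra_simps)
      then show "t * (1 - - t * j) = t + j" using tt by simp
    qed
    have "v * (y' * t) = t * (y * y') * t" unfolding v_def by (simp add: mult.assoc)
    then have v1: "v * (y' * t) = 1" using y'(1) tt by simp
    have "(y' * t) * v = y' * (t * t) * y" unfolding v_def by (simp add: mult.assoc)
    then have v2: "(y' * t) * v = 1" using y'(2) tt by simp
    have vu: "v \<in> ring_units" unfolding ring_units_def using v1 v2 by blast
    have pf: "projection s (1 - e)" unfolding projection_def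
      using s_one_minus[OF assms se] ee by (simp add: algebra_simps)
    have av: "a = (1 - e) + v" unfolding v_eq t_def using h(3) by simp
    have "e * v = v * e" unfolding v_eq t_def using ej ee by (simp add: algebra_simps)
    then have "(1 - e) * v = v * (1 - e)" by (simp add: algebra_simps)
    then show "\<exists>e u. projection s e \<and> u \<in> ring_units \<and> a = e + u \<and> e * u = u * e"
      using pf vu av by blast
  qed
  have bool: "x - x * x \<in> jacobson" for x :: 'a
  proof -
    obtain e j where h: "projection s e" "j \<in> jacobson" "x = e + j" "x * e = e * x"
      using JC unfolding strongly_J_star_clean_def by blast
    have ee: "e * e = e" using h(1) unfolding projection_def by auto
    have ej: "e * j = j * e" using h(3,4) by (simp add: algebra_simps)
    have "x - x * x = (1 - e - e - j) * j" unfolding h(3) using ee ej by (simp add: algebra_simps)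
    then show ?thesis using jac_left[OF h(2)] by simp
  qed
  have "\<not> one_sum_two_units_mod M" if M: "maximal_ideal M" for M :: "'a set"
  proof
    assume "one_sum_two_units_mod M"
    then obtain u v where uv: "unit_mod M u" "unit_mod M v" "1 - (u + v) \<in> M"
      unfolding one_sum_two_units_mod_def by blast
    have TM: "two_sided_ideal M" using M unfolding maximal_ideal_def by blast
    obtain wu where wu: "u * wu - 1 \<in> M" using uv(1) unfolding unit_mod_def by blast
    obtain wv where wv: "v * wv - 1 \<in> M" using uv(2) unfolding unit_mod_def by blast
    have u1: "u - 1 \<in> M" using idem_unit_mod[OF TM wu jac_in_max[OF M bool]] .
    have v1: "v - 1 \<in> M" using idem_unit_mod[OF TM wv jac_in_max[OF M bool]] .
    have "(1 - (u + v)) + (u - 1) + (v - 1) \<in> M" using tsi_add[OF TM tsi_add[OF TM uv(3) u1] v1] .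
    then have "- 1 \<in> M" by (simp add: algebra_simps)
    then have "1 \<in> M" using tsi_neg[OF TM] by fastforce
    then have "M = UNIV" using tsi_one[OF TM] by simp
    then show False using M unfolding maximal_ideal_def by simp
  qed
  then show "strongly_star_clean s \<and> (\<forall>M::'a set. maximal_ideal M \<longrightarrow> \<not> one_sum_two_units_mod M)"
    using SC by blast
next
  assume R: "strongly_star_clean s \<and> (\<forall>M::'a set. maximal_ideal M \<longrightarrow> \<not> one_sum_two_units_mod M)"
  then have SC: "strongly_star_clean s" and C2: "\<forall>M::'a set. maximal_ideal M \<longrightarrow> \<not> one_sum_two_units_mod M"
    by auto
  have P: "\<And>f. f * f = f \<Longrightarrow> s f = f" using sc_idem_proj[OF assms SC] .
  have CL: "\<forall>a::'a. \<exists>e v. e * e = e \<and> (\<forall>r. e * r = r * e) \<and> v \<in> ring_units \<and> a = e + v"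
  proof
    fix a :: 'a
    obtain e u where h: "projection s e" "u \<in> ring_units" "a = e + u"
      using SC unfolding strongly_star_clean_def by blast
    have ee: "e * e = e" using h(1) unfolding projection_def by auto
    have "\<forall>r. e * r = r * e" using idem_central[OF assms P ee] by blast
    then show "\<exists>e v. e * e = e \<and> (\<forall>r. e * r = r * e) \<and> v \<in> ring_units \<and> a = e + v"
      using ee h(2,3) by blast
  qed
  show "strongly_J_star_clean s" unfolding strongly_J_star_clean_def
  proof
    fix a :: 'a
    obtain e u where h: "projection s e" "u \<in> ring_units" "a = e + u" "e * u = u * e"
      using SC unfolding strongly_star_clean_def by blast
    have ee: "e * e = e" and se: "s e = e" using h(1) unfolding projection_def by auto
    obtain u' where u': "u * u' = 1" "u' * u = 1" using h(2) unfolding ring_units_def by blast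
    define t where "t = e + e - 1"
    have tt: "t * t = 1" unfolding t_def using ee by (simp add: algebra_simps)
    define w where "w = t * u"
    have "w * (u' * t) = t * (u * u') * t" unfolding w_def by (simp add: mult.assoc)
    then have w1: "w * (u' * t) = 1" using u'(1) tt by simp
    have "(u' * t) * w = u' * (t * t) * u" unfolding w_def by (simp add: mult.assoc)
    then have w2: "(u' * t) * w = 1" using u'(2) tt by simp
    have wu: "w \<in> ring_units" unfolding ring_units_def using w1 w2 by blast
    have J1: "1 + w \<in> jacobson" using one_plus_unit[OF CL C2 wu] .
    define j where "j = t * (1 + w)"
    have jJ: "j \<in> jacobson" unfolding j_def using jac_left[OF J1] .
    have j_eq: "j = t + u"
    proof -
      have "j = t + (t * t) * u" unfolding j_def w_def by (simp add: algebra_simps)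
      then show ?thesis using tt by simp
    qed
    have pf: "projection s (1 - e)" unfolding projection_def
      using s_one_minus[OF assms se] ee by (simp add: algebra_simps)
    have aj: "a = (1 - e) + j" unfolding j_eq t_def using h(3) by simp
    have "a * e = e * a" unfolding h(3) using h(4) ee by (simp add: algebra_simps)
    then have "a * (1 - e) = (1 - e) * a" by (simp add: algebra_simps)
    then show "\<exists>e u. projection s e \<and> u \<in> jacobson \<and> a = e + u \<and> a * e = e * a"
      using pf jJ aj by blast
  qed
qed

end
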